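(* Let $G=K_4$ and $\vec G=(V,E^+\cup E^-)$ as in the context. The all-ones vector $\mathbf 1\in\mathbb{Z}^{E^+\cup E^-}$ satisfies $\mathbf 1(\delta^+_{\vec G}(U))\ge3$ for all $\emptyset\neq U\subsetneq V$ (so it is a nowhere-zero $3$-SCD), but the arc set $E^+\cup E^-$ cannot be partitioned into $3$ strongly connected digraphs, i.e. there are no pairwise disjoint $F_1,F_2,F_3$ with $F_1\cup F_2\cup F_3=E^+\cup E^-$ and $\delta^+_{\vec G}(U)\cap F_i\neq\emptyset$ for all $i$ and all $\emptyset\neq U\subsetneq V$.
   Context: $K_4$ is the complete graph on 4 vertices. $\vec G=(V,E^+\cup E^-)$ is obtained from $G$ by replacing each edge $\{u,v\}$ by the two arcs $(u,v)$ and $(v,u)$; $\delta^+_{\vec G}(U)$ is the set of arcs leaving $U$, and $x(B)=\sum_{e\in B}x_e$. *)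

theory Defs
  imports Main
begin

text \<open>The complete graph K_4 on vertex set V = {0,1,2,3}; its bidirected digraph
  has arc set E^+ \<union> E^- = all ordered pairs (u,v) of distinct vertices.\<close>

definition K4_V :: "nat set" where
  "K4_V = {0, 1, 2, 3}"

definition K4_arcs :: "(nat \<times> nat) set" where
  "K4_arcs = {(u, v). u \<in> K4_V \<and> v \<in> K4_V \<and> u \<noteq> v}"

definition delta_out :: "nat set \<Rightarrow> (nat \<times> nat) set" where
  "delta_out U = {(u, v) \<in> K4_arcs. u \<in> U \<and> v \<notin> U}"

definition xsum :: "(nat \<times> nat \<Rightarrow> int) \<Rightarrow> (nat \<times> nat) set \<Rightarrow> int" where
  "xsum x B = (\<Sum>e\<in>B. x e)"

definition all_ones :: "nat \<times> nat \<Rightarrow> int" where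
  "all_ones e = 1"

end

theory Submission
  imports Defs
begin

lemma delta_prod: "U \<subseteq> K4_V \<Longrightarrow> delta_out U = U \<times> (K4_V - U)"
  unfolding delta_out_def K4_arcs_def by auto

lemma part1: assumes "U \<noteq> {}" "U \<subset> K4_V" shows "xsum all_ones (delta_out U) \<ge> 3"
proof -
  have fin: "finite K4_V" by (simp add: K4_V_def)
  have cV: "card K4_V = 4" by (simp add: K4_V_def)
  have sub: "U \<subseteq> K4_V" using assms(2) by blast
  have fU: "finite U" using sub fin by (rule finite_subset)
  have c1: "card U \<ge> 1" using assms(1) fU by (simp add: Suc_leI card_gt_0_iff)
  have nd: "K4_V - U \<noteq> {}" using assms(2) by blast
  have c2: "card (K4_V - U) \<ge> 1" using nd fin by (simp add: Suc_leI card_gt_0_iff)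
  have cd: "card (K4_V - U) = card K4_V - card U" using fU sub by (rule card_Diff_subset)
  have "xsum all_ones (delta_out U) = int (card (delta_out U))"
    by (simp add: xsum_def all_ones_def)
  also have "card (delta_out U) = card U * card (K4_V - U)"
    using sub by (simp add: delta_prod card_cartesian_product)
  finally have e: "xsum all_ones (delta_out U) = int (card U * card (K4_V - U))" .
  have "card U * card (K4_V - U) \<ge> 3"
  proof -
    obtain k where k: "card U = k" by blast
    then have a: "card (K4_V - U) = 4 - k" using cd cV by simp
    have "k \<ge> 1" "k \<le> 3" using c1 c2 k a by auto
    then have "k = 1 \<or> k = 2 \<or> k = 3" by auto
    then show ?thesis using k a by auto
  qed
  then show ?thesis using e by linarith
qed

lemma psI: "U \<subseteq> K4_V \<Longrightarrow> x \<in> K4_V \<Longrightarrow> x \<notin> U \<Longrightarrow> U \<subset> K4_V" by blast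

lemma cutI: "U \<noteq> {} \<and> U \<subset> K4_V \<Longrightarrow> U \<noteq> {} \<and> U \<subset> K4_V" .

theorem mainTheorem16:
  shows "(\<forall>U. U \<noteq> {} \<and> U \<subset> K4_V \<longrightarrow> xsum all_ones (delta_out U) \<ge> 3)
    \<and> \<not> (\<exists>F1 F2 F3. F1 \<inter> F2 = {} \<and> F1 \<inter> F3 = {} \<and> F2 \<inter> F3 = {}
          \<and> F1 \<union> F2 \<union> F3 = K4_arcs
          \<and> (\<forall>U. U \<noteq> {} \<and> U \<subset> K4_V \<longrightarrow>
                 delta_out U \<inter> F1 \<noteq> {} \<and> delta_out U \<inter> F2 \<noteq> {} \<and> delta_out U \<inter> F3 \<noteq> {}))"
proof (intro conjI)
  show "\<forall>U. U \<noteq> {} \<and> U \<subset> K4_V \<longrightarrow> xsum all_ones (delta_out U) \<ge> 3"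
    using part1 by simp
next
  show "\<not> (\<exists>F1 F2 F3. F1 \<inter> F2 = {} \<and> F1 \<inter> F3 = {} \<and> F2 \<inter> F3 = {}
          \<and> F1 \<union> F2 \<union> F3 = K4_arcs
          \<and> (\<forall>U. U \<noteq> {} \<and> U \<subset> K4_V \<longrightarrow>
                 delta_out U \<inter> F1 \<noteq> {} \<and> delta_out U \<inter> F2 \<noteq> {} \<and> delta_out U \<inter> F3 \<noteq> {}))"
  proof
    assume "\<exists>F1 F2 F3. F1 \<inter> F2 = {} \<and> F1 \<inter> F3 = {} \<and> F2 \<inter> F3 = {}
          \<and> F1 \<union> F2 \<union> F3 = K4_arcs
          \<and> (\<forall>U. U \<noteq> {} \<and> U \<subset> K4_V \<longrightarrow>
                 delta_out U \<inter> F1 \<noteq> {} \<and> delta_out U \<inter> F2 \<noteq> {} \<and> delta_out U \<inter> F3 \<noteq> {})"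
    then obtain F1 F2 F3 where d12: "F1 \<inter> F2 = {}" and d13: "F1 \<inter> F3 = {}" and d23: "F2 \<inter> F3 = {}"
      and un: "F1 \<union> F2 \<union> F3 = K4_arcs"
      and cutA: "\<forall>U. U \<noteq> {} \<and> U \<subset> K4_V \<longrightarrow>
                 delta_out U \<inter> F1 \<noteq> {} \<and> delta_out U \<inter> F2 \<noteq> {} \<and> delta_out U \<inter> F3 \<noteq> {}"
      by (elim exE conjE)
    have cut: "delta_out U \<inter> F1 \<noteq> {} \<and> delta_out U \<inter> F2 \<noteq> {} \<and> delta_out U \<inter> F3 \<noteq> {}"
      if "U \<noteq> {}" "U \<subset> K4_V" for U
      using cutA that by simp
    have D: "\<And>U. U \<subseteq> K4_V \<Longrightarrow> delta_out U = U \<times> (K4_V - U)" by (rule delta_prod)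
    have cs2: "\<And>a. \<not> (a \<in> F1 \<and> a \<in> F2)" "\<And>a. \<not> (a \<in> F1 \<and> a \<in> F3)" "\<And>a. \<not> (a \<in> F2 \<and> a \<in> F3)"
      using d12 d13 d23 by blast+
    have ne: "\<And>A F. (A \<inter> F \<noteq> {}) = (\<exists>a\<in>A. a \<in> F)" by blast
    have ps0: "{0::nat} \<subset> K4_V" by (rule psI[where x=1]) (simp_all add: K4_V_def)
    have cu0: "delta_out {0::nat} \<inter> F1 \<noteq> {} \<and> delta_out {0::nat} \<inter> F2 \<noteq> {} \<and> delta_out {0::nat} \<inter> F3 \<noteq> {}" by (rule cut[OF _ ps0]) simp
    have ps1: "{1::nat} \<subset> K4_V" by (rule psI[where x=0]) (simp_all add: K4_V_def)
    have cu1: "delta_out {1::nat} \<inter> F1 \<noteq> {} \<and> delta_out {1::nat} \<inter> F2 \<noteq> {} \<and> delta_out {1::nat} \<inter> F3 \<noteq> {}" by (rule cut[OF _ ps1]) simp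
    have ps2: "{2::nat} \<subset> K4_V" by (rule psI[where x=0]) (simp_all add: K4_V_def)
    have cu2: "delta_out {2::nat} \<inter> F1 \<noteq> {} \<and> delta_out {2::nat} \<inter> F2 \<noteq> {} \<and> delta_out {2::nat} \<inter> F3 \<noteq> {}" by (rule cut[OF _ ps2]) simp
    have ps3: "{3::nat} \<subset> K4_V" by (rule psI[where x=0]) (simp_all add: K4_V_def)
    have cu3: "delta_out {3::nat} \<inter> F1 \<noteq> {} \<and> delta_out {3::nat} \<inter> F2 \<noteq> {} \<and> delta_out {3::nat} \<inter> F3 \<noteq> {}" by (rule cut[OF _ ps3]) simp
    have ps4: "{0::nat,1} \<subset> K4_V" by (rule psI[where x=2]) (simp_all add: K4_V_def)
    have cu4: "delta_out {0::nat,1} \<inter> F1 \<noteq> {} \<and> delta_out {0::nat,1} \<inter> F2 \<noteq> {} \<and> delta_out {0::nat,1} \<inter> F3 \<noteq> {}" by (rule cut[OF _ ps4]) simp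
    have ps5: "{0::nat,2} \<subset> K4_V" by (rule psI[where x=1]) (simp_all add: K4_V_def)
    have cu5: "delta_out {0::nat,2} \<inter> F1 \<noteq> {} \<and> delta_out {0::nat,2} \<inter> F2 \<noteq> {} \<and> delta_out {0::nat,2} \<inter> F3 \<noteq> {}" by (rule cut[OF _ ps5]) simp
    have ps6: "{0::nat,3} \<subset> K4_V" by (rule psI[where x=1]) (simp_all add: K4_V_def)
    have cu6: "delta_out {0::nat,3} \<inter> F1 \<noteq> {} \<and> delta_out {0::nat,3} \<inter> F2 \<noteq> {} \<and> delta_out {0::nat,3} \<inter> F3 \<noteq> {}" by (rule cut[OF _ ps6]) simp
    have ps7: "{1::nat,2} \<subset> K4_V" by (rule psI[where x=0]) (simp_all add: K4_V_def)
    have cu7: "delta_out {1::nat,2} \<inter> F1 \<noteq> {} \<and> delta_out {1::nat,2} \<inter> F2 \<noteq> {} \<and> delta_out {1::nat,2} \<inter> F3 \<noteq> {}" by (rule cut[OF _ ps7]) simp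
    have ps8: "{1::nat,3} \<subset> K4_V" by (rule psI[where x=0]) (simp_all add: K4_V_def)
    have cu8: "delta_out {1::nat,3} \<inter> F1 \<noteq> {} \<and> delta_out {1::nat,3} \<inter> F2 \<noteq> {} \<and> delta_out {1::nat,3} \<inter> F3 \<noteq> {}" by (rule cut[OF _ ps8]) simp
    have ps9: "{2::nat,3} \<subset> K4_V" by (rule psI[where x=0]) (simp_all add: K4_V_def)
    have cu9: "delta_out {2::nat,3} \<inter> F1 \<noteq> {} \<and> delta_out {2::nat,3} \<inter> F2 \<noteq> {} \<and> delta_out {2::nat,3} \<inter> F3 \<noteq> {}" by (rule cut[OF _ ps9]) simp
    have ps10: "{0::nat,1,2} \<subset> K4_V" by (rule psI[where x=3]) (simp_all add: K4_V_def)
    have cu10: "delta_out {0::nat,1,2} \<inter> F1 \<noteq> {} \<and> delta_out {0::nat,1,2} \<inter> F2 \<noteq> {} \<and> delta_out {0::nat,1,2} \<inter> F3 \<noteq> {}" by (rule cut[OF _ ps10]) simp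
    have ps11: "{0::nat,1,3} \<subset> K4_V" by (rule psI[where x=2]) (simp_all add: K4_V_def)
    have cu11: "delta_out {0::nat,1,3} \<inter> F1 \<noteq> {} \<and> delta_out {0::nat,1,3} \<inter> F2 \<noteq> {} \<and> delta_out {0::nat,1,3} \<inter> F3 \<noteq> {}" by (rule cut[OF _ ps11]) simp
    have ps12: "{0::nat,2,3} \<subset> K4_V" by (rule psI[where x=1]) (simp_all add: K4_V_def)
    have cu12: "delta_out {0::nat,2,3} \<inter> F1 \<noteq> {} \<and> delta_out {0::nat,2,3} \<inter> F2 \<noteq> {} \<and> delta_out {0::nat,2,3} \<inter> F3 \<noteq> {}" by (rule cut[OF _ ps12]) simp
    have ps13: "{1::nat,2,3} \<subset> K4_V" by (rule psI[where x=0]) (simp_all add: K4_V_def)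
    have cu13: "delta_out {1::nat,2,3} \<inter> F1 \<noteq> {} \<and> delta_out {1::nat,2,3} \<inter> F2 \<noteq> {} \<and> delta_out {1::nat,2,3} \<inter> F3 \<noteq> {}" by (rule cut[OF _ ps13]) simp
    have "(0,1) \<in> F1 \<or> (0,2) \<in> F1 \<or> (0,3) \<in> F1" using cu0 D[OF psubset_imp_subset[OF ps0]] by (simp add: K4_V_def ne insert_Diff_if)
    moreover
    have "(0,1) \<in> F2 \<or> (0,2) \<in> F2 \<or> (0,3) \<in> F2" using cu0 D[OF psubset_imp_subset[OF ps0]] by (simp add: K4_V_def ne insert_Diff_if)
    moreover
    have "(0,1) \<in> F3 \<or> (0,2) \<in> F3 \<or> (0,3) \<in> F3" using cu0 D[OF psubset_imp_subset[OF ps0]] by (simp add: K4_V_def ne insert_Diff_if)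
    moreover
    have "(1,0) \<in> F1 \<or> (1,2) \<in> F1 \<or> (1,3) \<in> F1" using cu1 D[OF psubset_imp_subset[OF ps1]] by (simp add: K4_V_def ne insert_Diff_if)
    moreover
    have "(1,0) \<in> F2 \<or> (1,2) \<in> F2 \<or> (1,3) \<in> F2" using cu1 D[OF psubset_imp_subset[OF ps1]] by (simp add: K4_V_def ne insert_Diff_if)
    moreover
    have "(1,0) \<in> F3 \<or> (1,2) \<in> F3 \<or> (1,3) \<in> F3" using cu1 D[OF psubset_imp_subset[OF ps1]] by (simp add: K4_V_def ne insert_Diff_if)
    moreover
    have "(2,0) \<in> F1 \<or> (2,1) \<in> F1 \<or> (2,3) \<in> F1" using cu2 D[OF psubset_imp_subset[OF ps2]] by (simp add: K4_V_def ne insert_Diff_if)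
    moreover
    have "(2,0) \<in> F2 \<or> (2,1) \<in> F2 \<or> (2,3) \<in> F2" using cu2 D[OF psubset_imp_subset[OF ps2]] by (simp add: K4_V_def ne insert_Diff_if)
    moreover
    have "(2,0) \<in> F3 \<or> (2,1) \<in> F3 \<or> (2,3) \<in> F3" using cu2 D[OF psubset_imp_subset[OF ps2]] by (simp add: K4_V_def ne insert_Diff_if)
    moreover
    have "(3,0) \<in> F1 \<or> (3,1) \<in> F1 \<or> (3,2) \<in> F1" using cu3 D[OF psubset_imp_subset[OF ps3]] by (simp add: K4_V_def ne insert_Diff_if)
    moreover
    have "(3,0) \<in> F2 \<or> (3,1) \<in> F2 \<or> (3,2) \<in> F2" using cu3 D[OF psubset_imp_subset[OF ps3]] by (simp add: K4_V_def ne insert_Diff_if)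
    moreover
    have "(3,0) \<in> F3 \<or> (3,1) \<in> F3 \<or> (3,2) \<in> F3" using cu3 D[OF psubset_imp_subset[OF ps3]] by (simp add: K4_V_def ne insert_Diff_if)
    moreover
    have "(0,2) \<in> F1 \<or> (0,3) \<in> F1 \<or> (1,2) \<in> F1 \<or> (1,3) \<in> F1" using cu4 D[OF psubset_imp_subset[OF ps4]] by (simp add: K4_V_def ne insert_Diff_if)
    moreover
    have "(0,2) \<in> F2 \<or> (0,3) \<in> F2 \<or> (1,2) \<in> F2 \<or> (1,3) \<in> F2" using cu4 D[OF psubset_imp_subset[OF ps4]] by (simp add: K4_V_def ne insert_Diff_if)
    moreover
    have "(0,2) \<in> F3 \<or> (0,3) \<in> F3 \<or> (1,2) \<in> F3 \<or> (1,3) \<in> F3" using cu4 D[OF psubset_imp_subset[OF ps4]] by (simp add: K4_V_def ne insert_Diff_if)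
    moreover
    have "(0,1) \<in> F1 \<or> (0,3) \<in> F1 \<or> (2,1) \<in> F1 \<or> (2,3) \<in> F1" using cu5 D[OF psubset_imp_subset[OF ps5]] by (simp add: K4_V_def ne insert_Diff_if)
    moreover
    have "(0,1) \<in> F2 \<or> (0,3) \<in> F2 \<or> (2,1) \<in> F2 \<or> (2,3) \<in> F2" using cu5 D[OF psubset_imp_subset[OF ps5]] by (simp add: K4_V_def ne insert_Diff_if)
    moreover
    have "(0,1) \<in> F3 \<or> (0,3) \<in> F3 \<or> (2,1) \<in> F3 \<or> (2,3) \<in> F3" using cu5 D[OF psubset_imp_subset[OF ps5]] by (simp add: K4_V_def ne insert_Diff_if)
    moreover
    have "(0,1) \<in> F1 \<or> (0,2) \<in> F1 \<or> (3,1) \<in> F1 \<or> (3,2) \<in> F1" using cu6 D[OF psubset_imp_subset[OF ps6]] by (simp add: K4_V_def ne insert_Diff_if)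
    moreover
    have "(0,1) \<in> F2 \<or> (0,2) \<in> F2 \<or> (3,1) \<in> F2 \<or> (3,2) \<in> F2" using cu6 D[OF psubset_imp_subset[OF ps6]] by (simp add: K4_V_def ne insert_Diff_if)
    moreover
    have "(0,1) \<in> F3 \<or> (0,2) \<in> F3 \<or> (3,1) \<in> F3 \<or> (3,2) \<in> F3" using cu6 D[OF psubset_imp_subset[OF ps6]] by (simp add: K4_V_def ne insert_Diff_if)
    moreover
    have "(1,0) \<in> F1 \<or> (1,3) \<in> F1 \<or> (2,0) \<in> F1 \<or> (2,3) \<in> F1" using cu7 D[OF psubset_imp_subset[OF ps7]] by (simp add: K4_V_def ne insert_Diff_if)
    moreover
    have "(1,0) \<in> F2 \<or> (1,3) \<in> F2 \<or> (2,0) \<in> F2 \<or> (2,3) \<in> F2" using cu7 D[OF psubset_imp_subset[OF ps7]] by (simp add: K4_V_def ne insert_Diff_if)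
    moreover
    have "(1,0) \<in> F3 \<or> (1,3) \<in> F3 \<or> (2,0) \<in> F3 \<or> (2,3) \<in> F3" using cu7 D[OF psubset_imp_subset[OF ps7]] by (simp add: K4_V_def ne insert_Diff_if)
    moreover
    have "(1,0) \<in> F1 \<or> (1,2) \<in> F1 \<or> (3,0) \<in> F1 \<or> (3,2) \<in> F1" using cu8 D[OF psubset_imp_subset[OF ps8]] by (simp add: K4_V_def ne insert_Diff_if)
    moreover
    have "(1,0) \<in> F2 \<or> (1,2) \<in> F2 \<or> (3,0) \<in> F2 \<or> (3,2) \<in> F2" using cu8 D[OF psubset_imp_subset[OF ps8]] by (simp add: K4_V_def ne insert_Diff_if)
    moreover
    have "(1,0) \<in> F3 \<or> (1,2) \<in> F3 \<or> (3,0) \<in> F3 \<or> (3,2) \<in> F3" using cu8 D[OF psubset_imp_subset[OF ps8]] by (simp add: K4_V_def ne insert_Diff_if)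
    moreover
    have "(2,0) \<in> F1 \<or> (2,1) \<in> F1 \<or> (3,0) \<in> F1 \<or> (3,1) \<in> F1" using cu9 D[OF psubset_imp_subset[OF ps9]] by (simp add: K4_V_def ne insert_Diff_if)
    moreover
    have "(2,0) \<in> F2 \<or> (2,1) \<in> F2 \<or> (3,0) \<in> F2 \<or> (3,1) \<in> F2" using cu9 D[OF psubset_imp_subset[OF ps9]] by (simp add: K4_V_def ne insert_Diff_if)
    moreover
    have "(2,0) \<in> F3 \<or> (2,1) \<in> F3 \<or> (3,0) \<in> F3 \<or> (3,1) \<in> F3" using cu9 D[OF psubset_imp_subset[OF ps9]] by (simp add: K4_V_def ne insert_Diff_if)
    moreover
    have "(0,3) \<in> F1 \<or> (1,3) \<in> F1 \<or> (2,3) \<in> F1" using cu10 D[OF psubset_imp_subset[OF ps10]] by (simp add: K4_V_def ne insert_Diff_if)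
    moreover
    have "(0,3) \<in> F2 \<or> (1,3) \<in> F2 \<or> (2,3) \<in> F2" using cu10 D[OF psubset_imp_subset[OF ps10]] by (simp add: K4_V_def ne insert_Diff_if)
    moreover
    have "(0,3) \<in> F3 \<or> (1,3) \<in> F3 \<or> (2,3) \<in> F3" using cu10 D[OF psubset_imp_subset[OF ps10]] by (simp add: K4_V_def ne insert_Diff_if)
    moreover
    have "(0,2) \<in> F1 \<or> (1,2) \<in> F1 \<or> (3,2) \<in> F1" using cu11 D[OF psubset_imp_subset[OF ps11]] by (simp add: K4_V_def ne insert_Diff_if)
    moreover
    have "(0,2) \<in> F2 \<or> (1,2) \<in> F2 \<or> (3,2) \<in> F2" using cu11 D[OF psubset_imp_subset[OF ps11]] by (simp add: K4_V_def ne insert_Diff_if)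
    moreover
    have "(0,2) \<in> F3 \<or> (1,2) \<in> F3 \<or> (3,2) \<in> F3" using cu11 D[OF psubset_imp_subset[OF ps11]] by (simp add: K4_V_def ne insert_Diff_if)
    moreover
    have "(0,1) \<in> F1 \<or> (2,1) \<in> F1 \<or> (3,1) \<in> F1" using cu12 D[OF psubset_imp_subset[OF ps12]] by (simp add: K4_V_def ne insert_Diff_if)
    moreover
    have "(0,1) \<in> F2 \<or> (2,1) \<in> F2 \<or> (3,1) \<in> F2" using cu12 D[OF psubset_imp_subset[OF ps12]] by (simp add: K4_V_def ne insert_Diff_if)
    moreover
    have "(0,1) \<in> F3 \<or> (2,1) \<in> F3 \<or> (3,1) \<in> F3" using cu12 D[OF psubset_imp_subset[OF ps12]] by (simp add: K4_V_def ne insert_Diff_if)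
    moreover
    have "(1,0) \<in> F1 \<or> (2,0) \<in> F1 \<or> (3,0) \<in> F1" using cu13 D[OF psubset_imp_subset[OF ps13]] by (simp add: K4_V_def ne insert_Diff_if)
    moreover
    have "(1,0) \<in> F2 \<or> (2,0) \<in> F2 \<or> (3,0) \<in> F2" using cu13 D[OF psubset_imp_subset[OF ps13]] by (simp add: K4_V_def ne insert_Diff_if)
    moreover
    have "(1,0) \<in> F3 \<or> (2,0) \<in> F3 \<or> (3,0) \<in> F3" using cu13 D[OF psubset_imp_subset[OF ps13]] by (simp add: K4_V_def ne insert_Diff_if)
    moreover
    have "\<not> ((0,1) \<in> F1 \<and> (0,1) \<in> F2)" using cs2 by blast
    moreover
    have "\<not> ((0,1) \<in> F1 \<and> (0,1) \<in> F3)" using cs2 by blast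
    moreover
    have "\<not> ((0,1) \<in> F2 \<and> (0,1) \<in> F3)" using cs2 by blast
    moreover
    have "\<not> ((0,2) \<in> F1 \<and> (0,2) \<in> F2)" using cs2 by blast
    moreover
    have "\<not> ((0,2) \<in> F1 \<and> (0,2) \<in> F3)" using cs2 by blast
    moreover
    have "\<not> ((0,2) \<in> F2 \<and> (0,2) \<in> F3)" using cs2 by blast
    moreover
    have "\<not> ((0,3) \<in> F1 \<and> (0,3) \<in> F2)" using cs2 by blast
    moreover
    have "\<not> ((0,3) \<in> F1 \<and> (0,3) \<in> F3)" using cs2 by blast
    moreover
    have "\<not> ((0,3) \<in> F2 \<and> (0,3) \<in> F3)" using cs2 by blast
    moreover
    have "\<not> ((1,0) \<in> F1 \<and> (1,0) \<in> F2)" using cs2 by blast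
    moreover
    have "\<not> ((1,0) \<in> F1 \<and> (1,0) \<in> F3)" using cs2 by blast
    moreover
    have "\<not> ((1,0) \<in> F2 \<and> (1,0) \<in> F3)" using cs2 by blast
    moreover
    have "\<not> ((1,2) \<in> F1 \<and> (1,2) \<in> F2)" using cs2 by blast
    moreover
    have "\<not> ((1,2) \<in> F1 \<and> (1,2) \<in> F3)" using cs2 by blast
    moreover
    have "\<not> ((1,2) \<in> F2 \<and> (1,2) \<in> F3)" using cs2 by blast
    moreover
    have "\<not> ((1,3) \<in> F1 \<and> (1,3) \<in> F2)" using cs2 by blast
    moreover
    have "\<not> ((1,3) \<in> F1 \<and> (1,3) \<in> F3)" using cs2 by blast
    moreover
    have "\<not> ((1,3) \<in> F2 \<and> (1,3) \<in> F3)" using cs2 by blast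
    moreover
    have "\<not> ((2,0) \<in> F1 \<and> (2,0) \<in> F2)" using cs2 by blast
    moreover
    have "\<not> ((2,0) \<in> F1 \<and> (2,0) \<in> F3)" using cs2 by blast
    moreover
    have "\<not> ((2,0) \<in> F2 \<and> (2,0) \<in> F3)" using cs2 by blast
    moreover
    have "\<not> ((2,1) \<in> F1 \<and> (2,1) \<in> F2)" using cs2 by blast
    moreover
    have "\<not> ((2,1) \<in> F1 \<and> (2,1) \<in> F3)" using cs2 by blast
    moreover
    have "\<not> ((2,1) \<in> F2 \<and> (2,1) \<in> F3)" using cs2 by blast
    moreover
    have "\<not> ((2,3) \<in> F1 \<and> (2,3) \<in> F2)" using cs2 by blast
    moreover
    have "\<not> ((2,3) \<in> F1 \<and> (2,3) \<in> F3)" using cs2 by blast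
    moreover
    have "\<not> ((2,3) \<in> F2 \<and> (2,3) \<in> F3)" using cs2 by blast
    moreover
    have "\<not> ((3,0) \<in> F1 \<and> (3,0) \<in> F2)" using cs2 by blast
    moreover
    have "\<not> ((3,0) \<in> F1 \<and> (3,0) \<in> F3)" using cs2 by blast
    moreover
    have "\<not> ((3,0) \<in> F2 \<and> (3,0) \<in> F3)" using cs2 by blast
    moreover
    have "\<not> ((3,1) \<in> F1 \<and> (3,1) \<in> F2)" using cs2 by blast
    moreover
    have "\<not> ((3,1) \<in> F1 \<and> (3,1) \<in> F3)" using cs2 by blast
    moreover
    have "\<not> ((3,1) \<in> F2 \<and> (3,1) \<in> F3)" using cs2 by blast
    moreover
    have "\<not> ((3,2) \<in> F1 \<and> (3,2) \<in> F2)" using cs2 by blast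
    moreover
    have "\<not> ((3,2) \<in> F1 \<and> (3,2) \<in> F3)" using cs2 by blast
    moreover
    have "\<not> ((3,2) \<in> F2 \<and> (3,2) \<in> F3)" using cs2 by blast
    ultimately show False by sat
  qed
qed

end
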